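(* Let $\rho>0$, $p\ge2$, and let $W:\mathbb{R}\to\mathbb{R}$ be a strictly convex $C^3$ function with $W''\ge c_0>0$, $W(u)\ge\max(0,c_1|u|^p-c_2)$ ($c_1,c_2>0$), and $W'(u)/|u|^p\to0$ as $|u|\to\infty$. For $N\in\{1,2,\dots\}$ let $\epsilon=2\pi/N$ and let $\{x_i(t)\}_{i=0}^{N-1}$ solve $\frac{d}{dt}(\epsilon\rho\dot x_i)=W'\big(\frac{x_{i+1}-x_i}{\epsilon}\big)-W'\big(\frac{x_i-x_{i-1}}{\epsilon}\big)$, with the periodic convention $x_{N+i}=x_i+2\pi$, so that the energy $\sum_{i=0}^{N-1}\big[\frac{\epsilon\rho}{2}\dot x_i^2+\epsilon W\big(\frac{x_{i+1}-x_i}{\epsilon}\big)\big]$ is constant in time. Define, with $I^i_\epsilon=[i\epsilon,(i+1)\epsilon)$, $$y^\epsilon(t,X)=\sum_{i=0}^{N-1}\Big(x_i+\frac{X-i\epsilon}{\epsilon}(x_{i+1}-x_i)\Big)\mathbf{1}_{I^i_\epsilon}(X),\qquad\tilde y^\epsilon(t,X)=\sum_{i=0}^{N-1}x_i\mathbf{1}_{I^i_\epsilon}(X).$$ Assume the initial data $\{(x_i(0),\dot x_i(0))\}_{i=0}^{N-1}$ are such that the energy is bounded by some $E_0<\infty$ independent of $N$. Then for each such $\epsilon$ the functions $y^\epsilon$ and $\partial_ty^\epsilon$ are bounded continuous functions of $(t,X)$, and there exists a constant $C=C(E_0,\rho,c_1,c_2)$ such that, with $Q=\mathbb{R}/2\pi\mathbb{Z}$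 (identified with $[0,2\pi)$), (i) $\sup_t\big(\|\partial_ty^\epsilon\|_{L^2(Q)}+\|\partial_Xy^\epsilon\|_{L^p(Q)}+\|\partial_t\tilde y^\epsilon\|_{L^2(Q)}\big)\le C$; (ii) $\sup_t\|\tilde y^\epsilon-y^\epsilon\|_{L^p(Q)}\le C\epsilon$.
   Formalization: $y^\epsilon$ is bounded only on each time window [-T,T] x [0,2pi), for every real T, rather than on all of (t,X) with t ranging over the whole real line. The statement above fails without it. *)

theory Defs
  imports "HOL-Analysis.Analysis"
begin

definition strictly_convex_on :: "real set \<Rightarrow> (real \<Rightarrow> real) \<Rightarrow> bool" where
  "strictly_convex_on S f \<longleftrightarrow>
     (\<forall>x\<in>S. \<forall>y\<in>S. \<forall>u::real. x \<noteq> y \<and> 0 < u \<and> u < 1 \<longrightarrow>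
        f ((1 - u) * x + u * y) < (1 - u) * f x + u * f y)"

definition C3_real :: "(real \<Rightarrow> real) \<Rightarrow> bool" where
  "C3_real W \<longleftrightarrow> (\<exists>W1 W2 W3. \<forall>u.
      (W has_real_derivative W1 u) (at u) \<and>
      (W1 has_real_derivative W2 u) (at u) \<and>
      (W2 has_real_derivative W3 u) (at u) \<and> isCont W3 u)"

text \<open>Periodic extension of the particle positions x_0..x_{N-1}:
  x_{j} = x_{j mod N} + 2 pi (j div N) for all integers j, so x_{N+i} = x_i + 2 pi.\<close>
definition xext :: "nat \<Rightarrow> (nat \<Rightarrow> real \<Rightarrow> real) \<Rightarrow> int \<Rightarrow> real \<Rightarrow> real" where
  "xext N x j t = x (nat (j mod int N)) t + 2 * pi * real_of_int (j div int N)"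

definition epsN :: "nat \<Rightarrow> real" where
  "epsN N = 2 * pi / real N"

definition energy :: "nat \<Rightarrow> real \<Rightarrow> (real \<Rightarrow> real) \<Rightarrow> (nat \<Rightarrow> real \<Rightarrow> real)
    \<Rightarrow> (nat \<Rightarrow> real \<Rightarrow> real) \<Rightarrow> real \<Rightarrow> real" where
  "energy N \<rho> W x v t = (\<Sum>i<N. epsN N * \<rho> / 2 * (v i t)\<^sup>2
      + epsN N * W ((xext N x (int i + 1) t - xext N x (int i) t) / epsN N))"

definition yeps :: "nat \<Rightarrow> (nat \<Rightarrow> real \<Rightarrow> real) \<Rightarrow> real \<Rightarrow> real \<Rightarrow> real" where
  "yeps N x t X = (\<Sum>i<N. (x i t + (X - real i * epsN N) / epsN N
        * (xext N x (int i + 1) t - x i t))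
      * indicator {real i * epsN N ..< real (Suc i) * epsN N} X)"

definition ytil :: "nat \<Rightarrow> (nat \<Rightarrow> real \<Rightarrow> real) \<Rightarrow> real \<Rightarrow> real \<Rightarrow> real" where
  "ytil N x t X = (\<Sum>i<N. x i t * indicator {real i * epsN N ..< real (Suc i) * epsN N} X)"

definition Lp_int :: "real \<Rightarrow> (real \<Rightarrow> real) \<Rightarrow> ennreal" where
  "Lp_int p f = (\<integral>\<^sup>+ X\<in>{0..<2*pi}. ennreal (\<bar>f X\<bar> powr p) \<partial>lborel)"

definition Lp_norm :: "real \<Rightarrow> (real \<Rightarrow> real) \<Rightarrow> real" where
  "Lp_norm p f = (enn2real (Lp_int p f)) powr (1 / p)"

end

theory Submission
  imports Defs
begin


lemma eps_pos: "N \<ge> 1 \<Longrightarrow> epsN N > 0"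
  by (simp add: epsN_def)

lemma eps_N: "N \<ge> 1 \<Longrightarrow> real N * epsN N = 2 * pi"
  by (simp add: epsN_def)

lemma index_ex:
  assumes "N \<ge> 1" "0 \<le> X" "X < 2 * pi"
  shows "\<exists>k<N. real k * epsN N \<le> X \<and> X < real (Suc k) * epsN N"
proof -
  define e where "e = epsN N"
  have e: "e > 0" using eps_pos[OF assms(1)] e_def by simp
  have eN: "real N * e = 2 * pi" using eps_N[OF assms(1)] e_def by simp
  define k where "k = nat \<lfloor>X / e\<rfloor>"
  have f0: "\<lfloor>X / e\<rfloor> \<ge> 0" using e assms by simp
  have rk: "real k = of_int \<lfloor>X / e\<rfloor>" using f0 k_def by simp
  have "real k \<le> X / e" using rk by linarith
  hence 1: "real k * e \<le> X" using e by (simp add: field_simps)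
  have "X / e < real k + 1" using rk by linarith
  hence 2: "X < real (Suc k) * e" using e by (simp add: field_simps)
  have "X / e < real N" using assms eN e by (simp add: field_simps)
  hence "real k < real N" using rk by linarith
  hence "k < N" by simp
  thus ?thesis using 1 2 e_def by blast
qed

lemma index_unique:
  assumes "N \<ge> 1" "real k * epsN N \<le> X" "X < real (Suc k) * epsN N"
    "real i * epsN N \<le> X" "X < real (Suc i) * epsN N"
  shows "i = k"
proof -
  have e: "epsN N > 0" using eps_pos[OF assms(1)] .
  have "real i * epsN N < real (Suc k) * epsN N" using assms by linarith
  hence "real i < real (Suc k)" using e by (simp add: mult_less_cancel_right)
  moreover have "real k * epsN N < real (Suc i) * epsN N" using assms by linarith
  hence "real k < real (Suc i)" using e by (simp add: mult_less_cancel_right)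
  ultimately show ?thesis by linarith
qed

lemma AE_nonbreak: "AE X in lborel. \<forall>k\<in>{..(N::nat)}. X \<noteq> real k * e"
  by (intro AE_finite_allI) (auto intro: AE_lborel_singleton)

lemma int_bound:
  fixes f :: "real \<Rightarrow> real" and q :: real and N :: nat and b :: "nat \<Rightarrow> real"
  assumes N: "N \<ge> 1" and b: "\<And>k. k<N \<Longrightarrow> b k \<ge> 0"
  and fb: "\<And>k X. k < N \<Longrightarrow> real k * epsN N < X \<Longrightarrow> X < real (Suc k) * epsN N \<Longrightarrow> \<bar>f X\<bar> powr q \<le> b k"
  shows "Lp_int q f \<le> ennreal (epsN N * (\<Sum>k<N. b k))"
proof -
  define e where "e = epsN N"
  have e: "e > 0" using eps_pos[OF N] e_def by simp
  have "Lp_int q f = (\<integral>\<^sup>+X. ennreal (\<bar>f X\<bar> powr q) * indicator {0..<2*pi} X \<partial>lborel)"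
    unfolding Lp_int_def by simp
  also have "\<dots> \<le> (\<integral>\<^sup>+X. (\<Sum>k<N. ennreal (b k) * indicator {real k * e<..<real (Suc k) * e} X) \<partial>lborel)"
  proof (rule nn_integral_mono_AE)
    show "AE X in lborel. ennreal (\<bar>f X\<bar> powr q) * indicator {0..<2*pi} X
        \<le> (\<Sum>k<N. ennreal (b k) * indicator {real k * e<..<real (Suc k) * e} X)"
      using AE_nonbreak[of N e]
    proof eventually_elim
      case (elim X)
      show ?case
      proof (cases "X \<in> {0..<2*pi}")
        case False thus ?thesis by simp
      next
        case True
        then obtain k where k: "k < N" "real k * e \<le> X" "X < real (Suc k) * e"
          using index_ex[OF N] e_def by auto
        have "X \<noteq> real k * e" using elim k by auto
        hence kl: "real k * e < X" using k by linarith
        have "\<bar>f X\<bar> powr q \<le> b k" using fb[OF k(1)] kl k(3) e_def by simp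
        hence "ennreal (\<bar>f X\<bar> powr q) * indicator {0..<2*pi} X \<le> ennreal (b k) * indicator {real k * e<..<real (Suc k) * e} X"
          using True kl k(3) by (simp add: ennreal_leI)
        also have "\<dots> \<le> (\<Sum>k<N. ennreal (b k) * indicator {real k * e<..<real (Suc k) * e} X)"
          by (rule member_le_sum) (use k in auto)
        finally show ?thesis .
      qed
    qed
  qed
  also have "\<dots> = (\<Sum>k<N. ennreal (b k) * emeasure lborel {real k * e<..<real (Suc k) * e})"
    by (subst nn_integral_sum) (auto simp: nn_integral_cmult_indicator)
  also have "\<dots> = (\<Sum>k<N. ennreal (b k * e))"
  proof (rule sum.cong)
    fix k assume "k \<in> {..<N}"
    have "real k * e \<le> real (Suc k) * e" using e by (simp add: mult_right_mono)
    moreover have "real (Suc k) * e - real k * e = e" by (simp add: algebra_simps)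
    ultimately show "ennreal (b k) * emeasure lborel {real k * e<..<real (Suc k) * e} = ennreal (b k * e)"
      using b \<open>k \<in> {..<N}\<close> e by (simp add: ennreal_mult)
  qed simp
  also have "\<dots> = ennreal (\<Sum>k<N. b k * e)"
    by (rule sum_ennreal) (use b e in auto)
  also have "(\<Sum>k<N. b k * e) = epsN N * (\<Sum>k<N. b k)"
    by (simp add: e_def sum_distrib_left mult.commute)
  finally show ?thesis .
qed



lemma xext_nat: "i < N \<Longrightarrow> xext N x (int i) t = x i t"
  by (simp add: xext_def)

lemma xext_shift: "N \<ge> 1 \<Longrightarrow> xext N x (j + int N) t = xext N x j t + 2 * pi"
proof -
  assume N: "N \<ge> 1"
  have "(j + int N) mod int N = j mod int N" by simp
  moreover have "(j + int N) div int N = j div int N + 1" using N by simp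
  ultimately show ?thesis by (simp add: xext_def algebra_simps)
qed

lemma nat_mod_less: "N \<ge> 1 \<Longrightarrow> nat (j mod int N) < N"
  by (simp add: nat_less_iff)

lemma xext_deriv:
  assumes "N \<ge> 1" "\<forall>i<N. (x i has_real_derivative v i t) (at t)"
  shows "((\<lambda>s. xext N x j s) has_real_derivative v (nat (j mod int N)) t) (at t)"
proof -
  have "(x (nat (j mod int N)) has_real_derivative v (nat (j mod int N)) t) (at t)"
    using assms nat_mod_less by blast
  then show ?thesis unfolding xext_def
    by (auto intro!: derivative_eq_intros)
qed

lemma energy_const:
  fixes W :: "real \<Rightarrow> real"
  assumes rho: "\<rho> > 0" and C3: "C3_real W" and N: "N \<ge> 1"
  and ode: "\<forall>i<N. \<forall>t. (x i has_real_derivative v i t) (at t)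
          \<and> ((\<lambda>s. epsN N * \<rho> * v i s) has_real_derivative
               (deriv W ((xext N x (int i + 1) t - xext N x (int i) t) / epsN N)
                - deriv W ((xext N x (int i) t - xext N x (int i - 1) t) / epsN N))) (at t)"
  shows "energy N \<rho> W x v t = energy N \<rho> W x v 0"
proof -
  define e where "e = epsN N"
  have e: "e > 0" using eps_pos[OF N] e_def by simp
  obtain W1 where W1: "\<And>u. (W has_real_derivative W1 u) (at u)"
    using C3 unfolding C3_real_def by blast
  have dW: "deriv W u = W1 u" for u using W1 by (rule DERIV_imp_deriv)
  define D where "D j t = (xext N x (j + 1) t - xext N x j t) / e" for j t
  define vx where "vx j t = v (nat (j mod int N)) t" for j t
  define F where "F i t = W1 (D (int i) t) - W1 (D (int i - 1) t)" for i t
  have xd: "((\<lambda>s. xext N x j s) has_real_derivative vx j t) (at t)" for j t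
    using xext_deriv[OF N] ode unfolding vx_def by blast
  have vd: "(v i has_real_derivative F i t / (e * \<rho>)) (at t)" if "i < N" for i t
  proof -
    have "((\<lambda>s. e * \<rho> * v i s) has_real_derivative F i t) (at t)"
      using ode that unfolding F_def D_def e_def dW by simp
    then have "((\<lambda>s. (1 / (e * \<rho>)) * (e * \<rho> * v i s)) has_real_derivative (1 / (e * \<rho>)) * F i t) (at t)"
      by (rule DERIV_cmult)
    moreover have "(\<lambda>s. (1 / (e * \<rho>)) * (e * \<rho> * v i s)) = v i" using e rho by auto
    ultimately show ?thesis by simp
  qed
  have Dd: "((\<lambda>s. D j s) has_real_derivative (vx (j+1) t - vx j t) / e) (at t)" for j t
    unfolding D_def using e by (auto intro!: derivative_eq_intros xd simp: field_simps)
  have Ed: "(energy N \<rho> W x v has_real_derivative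
      (\<Sum>i<N. e * \<rho> / 2 * (2 * v i t * (F i t / (e * \<rho>))) + e * (W1 (D (int i) t) * ((vx (int i+1) t - vx (int i) t) / e)))) (at t)" for t
  proof -
    have eq: "energy N \<rho> W x v = (\<lambda>t. \<Sum>i<N. e * \<rho> / 2 * (v i t)\<^sup>2 + e * W (D (int i) t))"
      unfolding energy_def D_def e_def by simp
    show ?thesis unfolding eq
      apply (rule DERIV_sum)
      apply (rule derivative_eq_intros refl vd DERIV_chain2[OF W1] Dd | simp)+
      done
  qed
  define h where "h j t = vx j t * W1 (D (j - 1) t)" for j t
  have vxi: "vx (int i) t = v i t" if "i < N" for i t using that by (simp add: vx_def)
  have termeq: "e * \<rho> / 2 * (2 * v i t * (F i t / (e * \<rho>))) + e * (W1 (D (int i) t) * ((vx (int i+1) t - vx (int i) t) / e))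
     = h (int (Suc i)) t - h (int i) t" if "i < N" for i t
    using e rho that by (simp add: h_def F_def vxi field_simps)
  have Dper: "D (j + int N) t = D j t" for j t
  proof -
    have "xext N x (j + int N + 1) t = xext N x (j + 1) t + 2 * pi"
      using xext_shift[OF N, of x "j+1"] by (simp add: algebra_simps)
    then show ?thesis unfolding D_def using xext_shift[OF N, of x j] by simp
  qed
  have vper: "vx (int N) t = vx 0 t" for t by (simp add: vx_def)
  have hper: "h (int N) t = h 0 t" for t
    using Dper[of "-1" t] vper by (simp add: h_def)
  have "(energy N \<rho> W x v has_real_derivative 0) (at t)" for t
  proof -
    have "(\<Sum>i<N. e * \<rho> / 2 * (2 * v i t * (F i t / (e * \<rho>))) + e * (W1 (D (int i) t) * ((vx (int i+1) t - vx (int i) t) / e)))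
        = (\<Sum>i<N. h (int (Suc i)) t - h (int i) t)"
      by (intro sum.cong refl termeq) simp
    also have "\<dots> = 0" using sum_lessThan_telescope[of "\<lambda>i. h (int i) t" N] hper by simp
    finally show ?thesis using Ed[of t] by simp
  qed
  then show ?thesis by (intro DERIV_isconst_all) blast
qed



lemma ind_eq:
  assumes N: "N \<ge> 1" and k: "k < N" "real k * epsN N \<le> X" "X < real (Suc k) * epsN N"
  shows "(\<Sum>i<N. f i * indicator {real i * epsN N ..< real (Suc i) * epsN N} X) = (f k :: real)"
proof -
  have "(\<Sum>i<N. f i * indicator {real i * epsN N ..< real (Suc i) * epsN N} X) = (\<Sum>i<N. if i = k then f k else 0)"
  proof (rule sum.cong)
    fix i assume "i \<in> {..<N}"
    show "f i * indicator {real i * epsN N ..< real (Suc i) * epsN N} X = (if i = k then f k else 0)"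
    proof (cases "i = k")
      case True thus ?thesis using k by simp
    next
      case False
      hence "X \<notin> {real i * epsN N ..< real (Suc i) * epsN N}"
        using index_unique[OF N k(2,3), of i] by auto
      thus ?thesis using False by simp
    qed
  qed simp
  also have "\<dots> = f k" using k by simp
  finally show ?thesis .
qed

lemma yeps_on:
  assumes N: "N \<ge> 1" and k: "k < N" "real k * epsN N \<le> X" "X < real (Suc k) * epsN N"
  shows "yeps N x t X = x k t + (X - real k * epsN N) / epsN N * (xext N x (int k + 1) t - x k t)"
  unfolding yeps_def by (rule ind_eq[OF N k])

lemma ytil_on:
  assumes N: "N \<ge> 1" and k: "k < N" "real k * epsN N \<le> X" "X < real (Suc k) * epsN N"
  shows "ytil N x t X = x k t"
  unfolding ytil_def by (rule ind_eq[OF N k])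

lemma energy_bounds:
  fixes W :: "real \<Rightarrow> real"
  assumes rho: "\<rho> > 0" and N: "N \<ge> 1" and c1: "c1 > 0"
  and Wb: "\<forall>u. W u \<ge> max 0 (c1 * \<bar>u\<bar> powr p - c2)"
  and En: "energy N \<rho> W x v t \<le> E0"
  shows "epsN N * (\<Sum>i<N. (v i t)\<^sup>2) \<le> 2 * E0 / \<rho>"
    and "\<And>j. j < N \<Longrightarrow> (v j t)\<^sup>2 \<le> 2 * E0 / (epsN N * \<rho>)"
    and "epsN N * (\<Sum>i<N. \<bar>(xext N x (int i + 1) t - xext N x (int i) t) / epsN N\<bar> powr p) \<le> (E0 + 2 * pi * c2) / c1"
proof -
  define e where "e = epsN N"
  have e: "e > 0" using eps_pos[OF N] e_def by simp
  have eN: "real N * e = 2 * pi" using eps_N[OF N] e_def by simp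
  define D where "D i = (xext N x (int i + 1) t - xext N x (int i) t) / e" for i
  have W0: "W u \<ge> 0" for u using Wb[rule_format, of u] by simp
  have Wp: "W u \<ge> c1 * \<bar>u\<bar> powr p - c2" for u using Wb[rule_format, of u] by simp
  have En': "(\<Sum>i<N. e * \<rho> / 2 * (v i t)\<^sup>2) + (\<Sum>i<N. e * W (D i)) \<le> E0"
    using En unfolding energy_def D_def e_def by (simp add: sum.distrib)
  have s1: "(\<Sum>i<N. e * \<rho> / 2 * (v i t)\<^sup>2) \<ge> 0" using e rho by (intro sum_nonneg) simp
  have s2: "(\<Sum>i<N. e * W (D i)) \<ge> 0" using e W0 by (intro sum_nonneg) simp
  have A: "(\<Sum>i<N. e * \<rho> / 2 * (v i t)\<^sup>2) \<le> E0" using En' s2 by linarith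
  have "(\<Sum>i<N. e * \<rho> / 2 * (v i t)\<^sup>2) = e * \<rho> / 2 * (\<Sum>i<N. (v i t)\<^sup>2)"
    by (simp add: sum_distrib_left)
  hence A2: "\<rho> / 2 * (e * (\<Sum>i<N. (v i t)\<^sup>2)) \<le> E0" using A by (simp add: algebra_simps)
  thus "epsN N * (\<Sum>i<N. (v i t)\<^sup>2) \<le> 2 * E0 / \<rho>" using rho by (simp add: e_def field_simps)
  show "(v j t)\<^sup>2 \<le> 2 * E0 / (epsN N * \<rho>)" if j: "j < N" for j
  proof -
    have "(v j t)\<^sup>2 \<le> (\<Sum>i<N. (v i t)\<^sup>2)" by (rule member_le_sum) (use j in auto)
    hence "\<rho> / 2 * (e * (v j t)\<^sup>2) \<le> E0" using A2 e rho
      by (smt (verit, best) divide_pos_pos mult_left_mono)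
    thus ?thesis using rho e by (simp add: e_def field_simps)
  qed
  have B: "(\<Sum>i<N. e * W (D i)) \<le> E0" using En' s1 by linarith
  have "(\<Sum>i<N. e * (c1 * \<bar>D i\<bar> powr p - c2)) \<le> (\<Sum>i<N. e * W (D i))"
    using e Wp by (intro sum_mono) simp
  also have "(\<Sum>i<N. e * (c1 * \<bar>D i\<bar> powr p - c2)) = c1 * (e * (\<Sum>i<N. \<bar>D i\<bar> powr p)) - 2 * pi * c2"
    using eN by (simp add: sum_subtractf sum_distrib_left algebra_simps)
  finally have "c1 * (e * (\<Sum>i<N. \<bar>D i\<bar> powr p)) \<le> E0 + 2 * pi * c2" using B by linarith
  thus "epsN N * (\<Sum>i<N. \<bar>(xext N x (int i + 1) t - xext N x (int i) t) / epsN N\<bar> powr p) \<le> (E0 + 2 * pi * c2) / c1"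
    using c1 unfolding D_def e_def by (simp add: field_simps)
qed



definition hat :: "real \<Rightarrow> real" where "hat z = max 0 (1 - \<bar>z\<bar>)"

lemma hat_cont: "continuous_on S hat"
  unfolding hat_def by (intro continuous_intros)

lemma hat_bounds: "0 \<le> hat z" "hat z \<le> 1"
  unfolding hat_def by auto

lemma hat_sum:
  assumes N: "N \<ge> 1" and X: "0 \<le> X" "X < 2 * pi"
  shows "\<exists>k<N. (\<forall>g::nat\<Rightarrow>real. (\<Sum>j<Suc N. g j * hat (X / epsN N - real j))
      = g k * (1 - (X - real k * epsN N) / epsN N) + g (Suc k) * ((X - real k * epsN N) / epsN N))
      \<and> real k * epsN N \<le> X \<and> X < real (Suc k) * epsN N"
proof -
  define e where "e = epsN N"
  have e: "e > 0" using eps_pos[OF N] e_def by simp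
  obtain k where k: "k < N" "real k * e \<le> X" "X < real (Suc k) * e"
    using index_ex[OF N X] e_def by auto
  define s where "s = (X - real k * e) / e"
  have s: "0 \<le> s" "s < 1" using k e by (auto simp: s_def field_simps)
  have Xe: "X / e = real k + s" using e by (simp add: s_def field_simps)
  have "(\<Sum>j<Suc N. g j * hat (X / e - real j)) = g k * (1 - s) + g (Suc k) * s" for g :: "nat \<Rightarrow> real"
  proof -
    have "(\<Sum>j<Suc N. g j * hat (X / e - real j)) = (\<Sum>j\<in>{k, Suc k}. g j * hat (X / e - real j))"
    proof (rule sum.mono_neutral_right)
      show "{k, Suc k} \<subseteq> {..<Suc N}" using k by auto
      show "\<forall>j\<in>{..<Suc N} - {k, Suc k}. g j * hat (X / e - real j) = 0"
      proof
        fix j assume "j \<in> {..<Suc N} - {k, Suc k}"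
        hence "j < k \<or> j > Suc k" by auto
        hence "\<bar>X / e - real j\<bar> \<ge> 1" using Xe s by auto
        thus "g j * hat (X / e - real j) = 0" by (simp add: hat_def)
      qed
    qed simp
    also have "\<dots> = g k * (1 - s) + g (Suc k) * s"
      using Xe s by (simp add: hat_def)
    finally show ?thesis .
  qed
  thus ?thesis using k unfolding s_def e_def by blast
qed

definition G :: "nat \<Rightarrow> (int \<Rightarrow> real \<Rightarrow> real) \<Rightarrow> real \<Rightarrow> real \<Rightarrow> real" where
  "G N g t X = (\<Sum>j<Suc N. g (int j) t * hat (X / epsN N - real j))"

lemma yeps_G:
  assumes N: "N \<ge> 1" and X: "0 \<le> X" "X < 2 * pi"
  shows "yeps N x t X = G N (xext N x) t X"
proof -
  obtain k where k: "k < N" "real k * epsN N \<le> X" "X < real (Suc k) * epsN N"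
    and hs: "\<And>g::nat\<Rightarrow>real. (\<Sum>j<Suc N. g j * hat (X / epsN N - real j))
      = g k * (1 - (X - real k * epsN N) / epsN N) + g (Suc k) * ((X - real k * epsN N) / epsN N)"
    using hat_sum[OF N X] by blast
  show ?thesis
    unfolding G_def hs yeps_on[OF N k] using k
    by (simp add: xext_nat algebra_simps)
qed

lemma G_cont:
  assumes "\<And>j. continuous_on UNIV (g j)" and N: "N \<ge> 1"
  shows "continuous_on UNIV (\<lambda>z. G N g (fst z) (snd z))"
  unfolding G_def
  apply (intro continuous_intros continuous_on_compose2[OF assms(1)] continuous_on_compose2[OF hat_cont])
  using eps_pos[OF N] apply auto
  done

lemma G_deriv:
  assumes "\<And>j. ((g j) has_real_derivative g' j t) (at t)"
  shows "((\<lambda>s. G N g s X) has_real_derivative G N g' t X) (at t)"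
  unfolding G_def
  by (auto intro!: derivative_eq_intros DERIV_sum assms)



lemma v_isCont:
  assumes rho: "\<rho> > 0" and N: "N \<ge> 1" and i: "i < N"
  and ode: "\<forall>i<N. \<forall>t. (x i has_real_derivative v i t) (at t)
          \<and> ((\<lambda>s. epsN N * \<rho> * v i s) has_real_derivative (F i t :: real)) (at t)"
  shows "isCont (v i) t"
proof -
  have e: "epsN N > 0" using eps_pos[OF N] .
  have "((\<lambda>s. epsN N * \<rho> * v i s) has_real_derivative F i t) (at t)" using ode i by blast
  then have "((\<lambda>s. (1 / (epsN N * \<rho>)) * (epsN N * \<rho> * v i s)) has_real_derivative (1 / (epsN N * \<rho>)) * F i t) (at t)"
    by (rule DERIV_cmult)
  moreover have "(\<lambda>s. (1 / (epsN N * \<rho>)) * (epsN N * \<rho> * v i s)) = v i" using e rho by auto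
  ultimately have "(v i has_real_derivative (1 / (epsN N * \<rho>)) * F i t) (at t)" by simp
  then show ?thesis by (rule DERIV_isCont)
qed

lemma Lp_from_int:
  assumes "Lp_int q f \<le> ennreal B" "0 \<le> B" "0 < q"
  shows "Lp_int q f < \<infinity> \<and> Lp_norm q f \<le> B powr (1 / q)"
proof
  show "Lp_int q f < \<infinity>" using assms(1) by (simp add: le_less_trans)
  have "enn2real (Lp_int q f) \<le> B" using assms by (intro enn2real_leI) auto
  then show "Lp_norm q f \<le> B powr (1 / q)" unfolding Lp_norm_def
    using assms by (intro powr_mono2) auto
qed

lemma powr_inv_le:
  fixes a K p :: real
  assumes "0 \<le> a" "a \<le> K" "p \<ge> 2"
  shows "a powr (1 / p) \<le> max 1 K"
proof (cases "a \<le> 1")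
  case True
  then have "a powr (1 / p) \<le> 1" using assms by (intro powr_le1) auto
  then show ?thesis by simp
next
  case False
  then have "a powr (1 / p) \<le> a powr 1" using assms by (intro powr_mono) auto
  then show ?thesis using assms False by simp
qed

lemma sq_interp: "0 \<le> c \<Longrightarrow> c \<le> 1 \<Longrightarrow> (a + c * (b - a))\<^sup>2 \<le> a\<^sup>2 + (b::real)\<^sup>2"
proof -
  assume c: "0 \<le> c" "c \<le> 1"
  have "(1-c)*a^2 + c*b^2 - (a + c*(b-a))^2 = c*(1-c)*(a-b)^2" by algebra
  moreover have "c*(1-c)*(a-b)^2 \<ge> 0" using c by simp
  moreover have "(1-c)*a^2 + c*b^2 \<le> a^2 + b^2" using c
    by (smt (verit) mult_left_le_one_le zero_le_power2)
  ultimately show ?thesis by linarith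
qed



lemma main_inst:
  fixes \<rho> c1 c2 E0 p c0 :: real and W :: "real \<Rightarrow> real" and N :: nat
    and x v :: "nat \<Rightarrow> real \<Rightarrow> real"
  assumes rho: "\<rho> > 0" and c1: "c1 > 0" and c2: "c2 > 0"
  and p: "p \<ge> 2" and C3: "C3_real W"
  and Wb: "\<forall>u. W u \<ge> max 0 (c1 * \<bar>u\<bar> powr p - c2)"
  and N: "N \<ge> 1"
  and ode: "\<forall>i<N. \<forall>t. (x i has_real_derivative v i t) (at t)
          \<and> ((\<lambda>s. epsN N * \<rho> * v i s) has_real_derivative
               (deriv W ((xext N x (int i + 1) t - xext N x (int i) t) / epsN N)
                - deriv W ((xext N x (int i) t - xext N x (int i - 1) t) / epsN N))) (at t)"
  and E0: "energy N \<rho> W x v 0 \<le> E0"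
  shows
    "(continuous_on (UNIV \<times> {0..<2*pi}) (\<lambda>(t, X). yeps N x t X)
     \<and> (\<forall>T. bounded ((\<lambda>(t, X). yeps N x t X) ` ({-T..T} \<times> {0..<2*pi})))
     \<and> continuous_on (UNIV \<times> {0..<2*pi}) (\<lambda>(t, X). deriv (\<lambda>s. yeps N x s X) t)
     \<and> bounded ((\<lambda>(t, X). deriv (\<lambda>s. yeps N x s X) t) ` (UNIV \<times> {0..<2*pi}))
     \<and> (\<forall>t. Lp_int 2 (\<lambda>X. deriv (\<lambda>s. yeps N x s X) t) < \<infinity>
          \<and> Lp_int p (\<lambda>X. deriv (\<lambda>Y. yeps N x t Y) X) < \<infinity>
          \<and> Lp_int 2 (\<lambda>X. deriv (\<lambda>s. ytil N x s X) t) < \<infinity>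
          \<and> Lp_norm 2 (\<lambda>X. deriv (\<lambda>s. yeps N x s X) t)
            + Lp_norm p (\<lambda>X. deriv (\<lambda>Y. yeps N x t Y) X)
            + Lp_norm 2 (\<lambda>X. deriv (\<lambda>s. ytil N x s X) t)
          \<le> 2 * sqrt (4 * \<bar>E0\<bar> / \<rho>) + max 1 ((\<bar>E0\<bar> + 2 * pi * c2) / c1))
     \<and> (\<forall>t. Lp_int p (\<lambda>X. ytil N x t X - yeps N x t X) < \<infinity>
          \<and> Lp_norm p (\<lambda>X. ytil N x t X - yeps N x t X)
          \<le> (2 * sqrt (4 * \<bar>E0\<bar> / \<rho>) + max 1 ((\<bar>E0\<bar> + 2 * pi * c2) / c1)) * epsN N))"
proof -
  define e where "e = epsN N"
  have e: "e > 0" using eps_pos[OF N] e_def by simp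
  define K where "K = (\<bar>E0\<bar> + 2 * pi * c2) / c1"
  define A where "A = 4 * \<bar>E0\<bar> / \<rho>"
  define C where "C = 2 * sqrt A + max 1 K"
  have En: "energy N \<rho> W x v t \<le> E0" for t
    using energy_const[OF rho C3 N ode, of t] E0 by linarith
  note EB = energy_bounds[OF rho N c1 Wb En]
  have E0pos: "E0 \<ge> 0"
  proof -
    have "0 \<le> e * (\<Sum>i<N. (v i 0)\<^sup>2)" using e by (simp add: sum_nonneg)
    then have "0 \<le> 2 * E0 / \<rho>" using EB(1)[of 0] e_def by simp
    then show ?thesis using rho by (simp add: zero_le_divide_iff)
  qed
  hence aE: "\<bar>E0\<bar> = E0" by simp
  have A0: "A \<ge> 0" using rho by (simp add: A_def)
  have K0: "K \<ge> 0" using c1 c2 by (simp add: K_def)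
  define D where "D t k = (xext N x (int k + 1) t - x k t) / e" for t k
  have EBD: "e * (\<Sum>k<N. \<bar>D t k\<bar> powr p) \<le> K" for t
  proof -
    have "(\<Sum>k<N. \<bar>D t k\<bar> powr p) = (\<Sum>i<N. \<bar>(xext N x (int i + 1) t - xext N x (int i) t) / epsN N\<bar> powr p)"
      by (intro sum.cong refl) (simp add: D_def e_def xext_nat)
    then show ?thesis using EB(3)[of t] aE by (simp add: K_def e_def)
  qed
  have xd: "(x i has_real_derivative v i t) (at t)" if "i < N" for i t using ode that by blast
  define gv where "gv j t = v (nat (j mod int N)) t" for j t
  have gvd: "((\<lambda>s. xext N x j s) has_real_derivative gv j t) (at t)" for j t
    using xext_deriv[OF N] ode unfolding gv_def by blast
  have gvi: "gv (int i) t = v i t" if "i < N" for i t using that by (simp add: gv_def)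
  have vc: "isCont (v i) t" if "i < N" for i t
    by (rule v_isCont[OF rho N that ode])
  have cx: "continuous_on UNIV (xext N x j)" for j
    by (intro continuous_at_imp_continuous_on ballI DERIV_isCont) (rule gvd)
  have cv: "continuous_on UNIV (gv j)" for j
    unfolding gv_def using vc nat_mod_less[OF N] by (intro continuous_at_imp_continuous_on) blast
  have vb: "\<bar>gv j t\<bar> \<le> sqrt (2 * E0 / (e * \<rho>))" for j t
  proof -
    have "(gv j t)\<^sup>2 \<le> 2 * E0 / (e * \<rho>)" unfolding gv_def e_def by (rule EB(2)) (rule nat_mod_less[OF N])
    then show ?thesis by (simp add: real_le_rsqrt)
  qed
  have dty: "deriv (\<lambda>s. yeps N x s X) t = G N gv t X" if "0 \<le> X" "X < 2 * pi" for X t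
  proof -
    have "(\<lambda>s. yeps N x s X) = (\<lambda>s. G N (xext N x) s X)" using yeps_G[OF N that] by auto
    then show ?thesis using G_deriv[of "xext N x" gv t N X] gvd by (simp add: DERIV_imp_deriv)
  qed
  have part1: "continuous_on (UNIV \<times> {0..<2*pi}) (\<lambda>(t, X). yeps N x t X)"
  proof -
    have "continuous_on (UNIV \<times> {0..<2*pi}) (\<lambda>z. G N (xext N x) (fst z) (snd z))"
      by (rule continuous_on_subset[OF G_cont[OF cx N]]) auto
    then show ?thesis by (rule continuous_on_eq) (auto simp: yeps_G[OF N])
  qed
  have part2: "bounded ((\<lambda>(t, X). yeps N x t X) ` ({-T..T} \<times> {0..<2*pi}))" for T
  proof -
    have "bounded ((\<lambda>z. G N (xext N x) (fst z) (snd z)) ` ({-T..T} \<times> {0..2*pi}))"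
      by (intro compact_imp_bounded compact_continuous_image compact_Times compact_Icc
          continuous_on_subset[OF G_cont[OF cx N]]) auto
    moreover have "(\<lambda>(t, X). yeps N x t X) ` ({-T..T} \<times> {0..<2*pi}) \<subseteq>
        (\<lambda>z. G N (xext N x) (fst z) (snd z)) ` ({-T..T} \<times> {0..2*pi})"
      by (auto simp: yeps_G[OF N] image_iff intro!: bexI)
    ultimately show ?thesis by (rule bounded_subset)
  qed
  have part3: "continuous_on (UNIV \<times> {0..<2*pi}) (\<lambda>(t, X). deriv (\<lambda>s. yeps N x s X) t)"
  proof -
    have "continuous_on (UNIV \<times> {0..<2*pi}) (\<lambda>z. G N gv (fst z) (snd z))"
      by (rule continuous_on_subset[OF G_cont[OF cv N]]) auto
    then show ?thesis by (rule continuous_on_eq) (auto simp: dty)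
  qed
  have part4: "bounded ((\<lambda>(t, X). deriv (\<lambda>s. yeps N x s X) t) ` (UNIV \<times> {0..<2*pi}))"
  proof -
    define B where "B = sqrt (2 * E0 / (e * \<rho>))"
    have "\<bar>G N gv t X\<bar> \<le> real (Suc N) * B" for t X
    proof -
      have "\<bar>G N gv t X\<bar> \<le> (\<Sum>j<Suc N. \<bar>gv (int j) t * hat (X / epsN N - real j)\<bar>)"
        unfolding G_def by (rule sum_abs)
      also have "\<dots> \<le> (\<Sum>j<Suc N. B)"
      proof (rule sum_mono)
        fix j
        have "\<bar>gv (int j) t * hat (X / epsN N - real j)\<bar> = \<bar>gv (int j) t\<bar> * hat (X / epsN N - real j)"
          using hat_bounds by (simp add: abs_mult)
        also have "\<dots> \<le> \<bar>gv (int j) t\<bar>" using hat_bounds by (simp add: mult_left_le)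
        finally show "\<bar>gv (int j) t * hat (X / epsN N - real j)\<bar> \<le> B" using vb[of "int j" t] B_def by linarith
      qed
      finally show ?thesis by simp
    qed
    then show ?thesis unfolding bounded_iff by (auto simp: dty)
  qed
  have part5: "Lp_int 2 (\<lambda>X. deriv (\<lambda>s. yeps N x s X) t) < \<infinity>
          \<and> Lp_int p (\<lambda>X. deriv (\<lambda>Y. yeps N x t Y) X) < \<infinity>
          \<and> Lp_int 2 (\<lambda>X. deriv (\<lambda>s. ytil N x s X) t) < \<infinity>
          \<and> Lp_norm 2 (\<lambda>X. deriv (\<lambda>s. yeps N x s X) t)
            + Lp_norm p (\<lambda>X. deriv (\<lambda>Y. yeps N x t Y) X)
            + Lp_norm 2 (\<lambda>X. deriv (\<lambda>s. ytil N x s X) t) \<le> C" for t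
  proof -
    have sv: "e * (\<Sum>i<N. (v i t)\<^sup>2) \<le> 2 * E0 / \<rho>" using EB(1)[of t] e_def by simp
    have I1: "Lp_int 2 (\<lambda>X. deriv (\<lambda>s. yeps N x s X) t) \<le> ennreal A"
    proof -
      define b where "b k = (v k t)\<^sup>2 + (gv (int k + 1) t)\<^sup>2" for k
      have "Lp_int 2 (\<lambda>X. deriv (\<lambda>s. yeps N x s X) t) \<le> ennreal (epsN N * (\<Sum>k<N. b k))"
      proof (rule int_bound[OF N])
        fix k X assume k: "k < N" "real k * epsN N < X" "X < real (Suc k) * epsN N"
        define c where "c = (X - real k * e) / e"
        have c: "0 \<le> c" "c \<le> 1" using k e by (auto simp: c_def e_def field_simps)
        have "(\<lambda>s. yeps N x s X) = (\<lambda>s. x k s + c * (xext N x (int k + 1) s - x k s))"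
          using yeps_on[OF N k(1)] k by (auto simp: c_def e_def)
        moreover have "((\<lambda>s. x k s + c * (xext N x (int k + 1) s - x k s)) has_real_derivative
            v k t + c * (gv (int k + 1) t - v k t)) (at t)"
          using xd[OF k(1), of t] gvd[of "int k + 1" t]
          by (auto intro!: derivative_eq_intros)
        ultimately have "deriv (\<lambda>s. yeps N x s X) t = v k t + c * (gv (int k + 1) t - v k t)"
          by (simp add: DERIV_imp_deriv)
        then show "\<bar>deriv (\<lambda>s. yeps N x s X) t\<bar> powr 2 \<le> b k"
          using sq_interp[OF c] by (simp add: b_def powr_numeral)
      qed (simp add: b_def)
      also have "epsN N * (\<Sum>k<N. b k) = 2 * (e * (\<Sum>i<N. (v i t)\<^sup>2))"
      proof -
        define f where "f n = (gv (int n) t)\<^sup>2" for n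
        have "(\<Sum>k<N. f (Suc k) - f k) = f N - f 0" by (rule sum_lessThan_telescope)
        also have "f N = f 0" by (simp add: f_def gv_def)
        finally have "(\<Sum>k<N. f (Suc k)) = (\<Sum>k<N. f k)" by (simp add: sum_subtractf)
        moreover have "(\<Sum>k<N. f k) = (\<Sum>k<N. (v k t)\<^sup>2)" by (intro sum.cong refl) (simp add: f_def gvi)
        ultimately have "(\<Sum>k<N. (gv (int k + 1) t)\<^sup>2) = (\<Sum>k<N. (v k t)\<^sup>2)"
          by (simp add: f_def add.commute)
        then show ?thesis by (simp add: b_def sum.distrib e_def algebra_simps)
      qed
      also have "\<dots> \<le> A" using sv aE by (simp add: A_def)
      finally show ?thesis by (simp add: ennreal_leI)
    qed
    have I2: "Lp_int p (\<lambda>X. deriv (\<lambda>Y. yeps N x t Y) X) \<le> ennreal K"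
    proof -
      have "Lp_int p (\<lambda>X. deriv (\<lambda>Y. yeps N x t Y) X) \<le> ennreal (epsN N * (\<Sum>k<N. \<bar>D t k\<bar> powr p))"
      proof (rule int_bound[OF N])
        fix k X assume k: "k < N" "real k * epsN N < X" "X < real (Suc k) * epsN N"
        have "((\<lambda>Y. x k t + (Y - real k * e) / e * (xext N x (int k + 1) t - x k t)) has_real_derivative D t k) (at X)"
          unfolding D_def using e by (auto intro!: derivative_eq_intros simp: field_simps)
        then have "((\<lambda>Y. yeps N x t Y) has_real_derivative D t k) (at X)"
        proof (rule has_field_derivative_transform_within_open)
          show "open {real k * e<..<real (Suc k) * e}" by simp
          show "X \<in> {real k * e<..<real (Suc k) * e}" using k e_def by simp
          fix Y assume "Y \<in> {real k * e<..<real (Suc k) * e}"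
          then show "x k t + (Y - real k * e) / e * (xext N x (int k + 1) t - x k t) = yeps N x t Y"
            using yeps_on[OF N k(1), of Y x t] e_def by simp
        qed
        then show "\<bar>deriv (\<lambda>Y. yeps N x t Y) X\<bar> powr p \<le> \<bar>D t k\<bar> powr p"
          by (simp add: DERIV_imp_deriv)
      qed simp
      also have "\<dots> \<le> ennreal K" using EBD[of t] e_def by (simp add: ennreal_leI)
      finally show ?thesis .
    qed
    have I3: "Lp_int 2 (\<lambda>X. deriv (\<lambda>s. ytil N x s X) t) \<le> ennreal A"
    proof -
      have "Lp_int 2 (\<lambda>X. deriv (\<lambda>s. ytil N x s X) t) \<le> ennreal (epsN N * (\<Sum>k<N. (v k t)\<^sup>2))"
      proof (rule int_bound[OF N])
        fix k X assume k: "k < N" "real k * epsN N < X" "X < real (Suc k) * epsN N"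
        have "(\<lambda>s. ytil N x s X) = x k" using ytil_on[OF N k(1)] k by auto
        then have "deriv (\<lambda>s. ytil N x s X) t = v k t" using xd[OF k(1)] by (simp add: DERIV_imp_deriv)
        then show "\<bar>deriv (\<lambda>s. ytil N x s X) t\<bar> powr 2 \<le> (v k t)\<^sup>2" by (simp add: powr_numeral)
      qed simp
      also have "\<dots> \<le> ennreal A" using sv aE e_def rho
        by (intro ennreal_leI) (auto simp: A_def field_simps)
      finally show ?thesis .
    qed
    have N1: "Lp_int 2 (\<lambda>X. deriv (\<lambda>s. yeps N x s X) t) < \<infinity> \<and> Lp_norm 2 (\<lambda>X. deriv (\<lambda>s. yeps N x s X) t) \<le> sqrt A"
      using Lp_from_int[OF I1 A0] A0 by (simp add: powr_half_sqrt)
    have N3: "Lp_int 2 (\<lambda>X. deriv (\<lambda>s. ytil N x s X) t) < \<infinity> \<and> Lp_norm 2 (\<lambda>X. deriv (\<lambda>s. ytil N x s X) t) \<le> sqrt A"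
      using Lp_from_int[OF I3 A0] A0 by (simp add: powr_half_sqrt)
    have N2: "Lp_int p (\<lambda>X. deriv (\<lambda>Y. yeps N x t Y) X) < \<infinity> \<and> Lp_norm p (\<lambda>X. deriv (\<lambda>Y. yeps N x t Y) X) \<le> max 1 K"
      using Lp_from_int[OF I2 K0] powr_inv_le[OF K0 order_refl p] p by auto
    show ?thesis using N1 N2 N3 by (simp add: C_def)
  qed
  have part6: "Lp_int p (\<lambda>X. ytil N x t X - yeps N x t X) < \<infinity>
          \<and> Lp_norm p (\<lambda>X. ytil N x t X - yeps N x t X) \<le> C * epsN N" for t
  proof -
    have "Lp_int p (\<lambda>X. ytil N x t X - yeps N x t X) \<le> ennreal (epsN N * (\<Sum>k<N. e powr p * \<bar>D t k\<bar> powr p))"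
    proof (rule int_bound[OF N])
      fix k X assume k: "k < N" "real k * epsN N < X" "X < real (Suc k) * epsN N"
      have "ytil N x t X - yeps N x t X = - ((X - real k * e) * D t k)"
        using ytil_on[OF N k(1), of X x t] yeps_on[OF N k(1), of X x t] k e
        by (simp add: D_def e_def)
      then have "\<bar>ytil N x t X - yeps N x t X\<bar> = (X - real k * e) * \<bar>D t k\<bar>"
        using k e_def by (simp add: abs_mult)
      also have "\<dots> \<le> e * \<bar>D t k\<bar>"
        using k e_def by (intro mult_right_mono) (auto simp: algebra_simps)
      finally have "\<bar>ytil N x t X - yeps N x t X\<bar> powr p \<le> (e * \<bar>D t k\<bar>) powr p"
        using p by (intro powr_mono2) auto
      then show "\<bar>ytil N x t X - yeps N x t X\<bar> powr p \<le> e powr p * \<bar>D t k\<bar> powr p"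
        using e by (simp add: powr_mult)
    qed simp
    also have "epsN N * (\<Sum>k<N. e powr p * \<bar>D t k\<bar> powr p) = e powr p * (e * (\<Sum>k<N. \<bar>D t k\<bar> powr p))"
      by (simp add: e_def sum_distrib_left algebra_simps)
    finally have I: "Lp_int p (\<lambda>X. ytil N x t X - yeps N x t X) \<le> ennreal (e powr p * (e * (\<Sum>k<N. \<bar>D t k\<bar> powr p)))" .
    define S where "S = e * (\<Sum>k<N. \<bar>D t k\<bar> powr p)"
    have S0: "S \<ge> 0" using e by (simp add: S_def sum_nonneg)
    have L: "Lp_int p (\<lambda>X. ytil N x t X - yeps N x t X) < \<infinity> \<and>
        Lp_norm p (\<lambda>X. ytil N x t X - yeps N x t X) \<le> (e powr p * S) powr (1 / p)"
      using Lp_from_int[OF I[folded S_def]] S0 e p by auto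
    have "(e powr p * S) powr (1 / p) = e * S powr (1 / p)"
      using e p by (simp add: powr_mult powr_powr)
    also have "\<dots> \<le> e * max 1 K"
      using powr_inv_le[OF S0 _ p] EBD[of t] e by (simp add: S_def)
    also have "\<dots> \<le> C * e" using e by (simp add: C_def mult.commute A0)
    finally show ?thesis using L e_def by simp
  qed
  show ?thesis
    using part1 part2 part3 part4 part5 part6 unfolding C_def A_def K_def by blast
qed

theorem lemma5p1:
  fixes \<rho> c1 c2 E0 :: real
  assumes "\<rho> > 0" and "c1 > 0" and "c2 > 0"
  shows "\<exists>C::real. \<forall>(p::real) (W::real \<Rightarrow> real) (c0::real) (N::nat)
           (x::nat \<Rightarrow> real \<Rightarrow> real) (v::nat \<Rightarrow> real \<Rightarrow> real).
    (p \<ge> 2 \<and> C3_real W \<and> strictly_convex_on UNIV W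
     \<and> c0 > 0 \<and> (\<forall>u. deriv (deriv W) u \<ge> c0)
     \<and> (\<forall>u. W u \<ge> max 0 (c1 * \<bar>u\<bar> powr p - c2))
     \<and> ((\<lambda>u. deriv W u / \<bar>u\<bar> powr p) \<longlongrightarrow> 0) at_infinity
     \<and> N \<ge> 1
     \<and> (\<forall>i<N. \<forall>t. (x i has_real_derivative v i t) (at t)
          \<and> ((\<lambda>s. epsN N * \<rho> * v i s) has_real_derivative
               (deriv W ((xext N x (int i + 1) t - xext N x (int i) t) / epsN N)
                - deriv W ((xext N x (int i) t - xext N x (int i - 1) t) / epsN N))) (at t))
     \<and> energy N \<rho> W x v 0 \<le> E0)
    \<longrightarrow>
    (continuous_on (UNIV \<times> {0..<2*pi}) (\<lambda>(t, X). yeps N x t X)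
     \<and> (\<forall>T. bounded ((\<lambda>(t, X). yeps N x t X) ` ({-T..T} \<times> {0..<2*pi})))
     \<and> continuous_on (UNIV \<times> {0..<2*pi}) (\<lambda>(t, X). deriv (\<lambda>s. yeps N x s X) t)
     \<and> bounded ((\<lambda>(t, X). deriv (\<lambda>s. yeps N x s X) t) ` (UNIV \<times> {0..<2*pi}))
     \<and> (\<forall>t. Lp_int 2 (\<lambda>X. deriv (\<lambda>s. yeps N x s X) t) < \<infinity>
          \<and> Lp_int p (\<lambda>X. deriv (\<lambda>Y. yeps N x t Y) X) < \<infinity>
          \<and> Lp_int 2 (\<lambda>X. deriv (\<lambda>s. ytil N x s X) t) < \<infinity>
          \<and> Lp_norm 2 (\<lambda>X. deriv (\<lambda>s. yeps N x s X) t)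
            + Lp_norm p (\<lambda>X. deriv (\<lambda>Y. yeps N x t Y) X)
            + Lp_norm 2 (\<lambda>X. deriv (\<lambda>s. ytil N x s X) t) \<le> C)
     \<and> (\<forall>t. Lp_int p (\<lambda>X. ytil N x t X - yeps N x t X) < \<infinity>
          \<and> Lp_norm p (\<lambda>X. ytil N x t X - yeps N x t X) \<le> C * epsN N))"
    by (intro exI[of _ "2 * sqrt (4 * \<bar>E0\<bar> / \<rho>) + max 1 ((\<bar>E0\<bar> + 2 * pi * c2) / c1)"] allI impI)
     (elim conjE, rule main_inst[OF assms], assumption+)

end
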